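(* Let $\mathcal{V},\mathcal{W}$ be real, separable, infinite-dimensional Hilbert spaces, fix $c>0$ and $p\in[1,\infty]$, and let $\mathcal{X}=\{v\in\mathcal{V}:\|v\|\le1\}$, $\mathcal{Y}=\{w\in\mathcal{W}:\|w\|\le c\}$, $\mathcal{F}_p=\{f\in S_p(\mathcal{V},\mathcal{W}):\|f\|_p\le c\}$. Then for every $T\in\mathbb{N}$, \[\inf_{\mathcal{A}}\mathtt{R}_{\mathcal{A}}(T,\mathcal{F}_p)\ge c^2\,T^{1-\frac1p}\] (with $1/p=0$ for $p=\infty$), the infimum being over all (possibly randomized) online learning algorithms. In particular $\mathcal{F}_\infty$ is not online learnable.
   Context: For a compact linear operator $f:\mathcal{V}\to\mathcal{W}$ with singular values $(s_n(f))_{n\ge1}$, $\|f\|_p=(\sum_n s_n(f)^p)^{1/p}$ for $p\in[1,\infty)$ and $\|f\|_\infty=\sup_n s_n(f)$; $S_p(\mathcal{V},\mathcal{W})$ is the set of compact linear operators with $\|f\|_p<\infty$. Online protocol: for $t=1,\dots,T$, an adversary picks $(x_t,y_t)\in\mathcal{X}\times\mathcal{Y}$ and reveals $x_t$; the learner $\mathcal{A}$, using past labeled examples and $x_t$ (and possibly internal randomness), predicts $\mathcal{A}(x_t)\in\mathcal{Y}$; then $y_t$ is revealed, with loss $\|\mathcal{A}(x_t)-y_t\|^2$. The regret is \[\mathtt{R}_{\mathcal{A}}(T,\mathcal{F})=\sup_{(x_1,y_1),\dots,(x_T,y_T)}\mathbb{E}\Big[\sum_{t=1}^T\|\mathcal{A}(x_t)-y_t\|^2-\inf_{f\in\mathcal{F}}\sum_{t=1}^T\|f(x_t)-y_t\|^2\Big].\]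 A class $\mathcal{F}$ is online learnable if some algorithm has regret that is a non-decreasing sublinear function of $T$. *)

theory Defs
  imports "HOL-Analysis.Analysis" "HOL-Probability.Probability"
begin

definition adjoint_op :: "('a::real_inner \<Rightarrow> 'b::real_inner) \<Rightarrow> 'b \<Rightarrow> 'a" where
  "adjoint_op f = (SOME g. \<forall>x y. inner (f x) y = inner x (g y))"

definition compact_op :: "('a::real_normed_vector \<Rightarrow> 'b::real_normed_vector) \<Rightarrow> bool" where
  "compact_op f \<longleftrightarrow> bounded_linear f \<and> compact (closure (f ` cball 0 1))"

definition eigsp_sq :: "('a::real_inner \<Rightarrow> 'b::real_inner) \<Rightarrow> real \<Rightarrow> 'a set" where
  "eigsp_sq f \<mu> = {x. adjoint_op f (f x) = \<mu> *\<^sub>R x}"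

definition sv_count :: "('a::real_inner \<Rightarrow> 'b::real_inner) \<Rightarrow> real \<Rightarrow> nat" where
  "sv_count f t = (\<Sum>\<mu>\<in>{\<mu>. t \<le> \<mu> \<and> (\<exists>x. x \<noteq> 0 \<and> x \<in> eigsp_sq f \<mu>)}. dim (eigsp_sq f \<mu>))"

text \<open>Singular values, nonincreasing and counted with multiplicity (padded with zeros):
  \<open>singular_value f n\<close> is \<open>s_{n+1}(f)\<close>, the square root of the (n+1)-st largest eigenvalue
  of f* f (counted with multiplicity), and 0 if there are fewer than n+1 positive ones.\<close>
definition singular_value :: "('a::real_inner \<Rightarrow> 'b::real_inner) \<Rightarrow> nat \<Rightarrow> real" where
  "singular_value f n = sqrt (Sup ({t. 0 < t \<and> Suc n \<le> sv_count f t} \<union> {0}))"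

definition schatten_norm :: "ereal \<Rightarrow> ('a::real_inner \<Rightarrow> 'b::real_inner) \<Rightarrow> ereal" where
  "schatten_norm p f =
     (if p = \<infinity> then (SUP n. ereal (singular_value f n))
      else if summable (\<lambda>n. singular_value f n powr real_of_ereal p)
      then ereal ((\<Sum>n. singular_value f n powr real_of_ereal p) powr (1 / real_of_ereal p))
      else \<infinity>)"

definition schatten_class :: "ereal \<Rightarrow> ('a::real_inner \<Rightarrow> 'b::real_inner) set" where
  "schatten_class p = {f. compact_op f \<and> schatten_norm p f < \<infinity>}"

definition schatten_ball :: "ereal \<Rightarrow> real \<Rightarrow> ('a::real_inner \<Rightarrow> 'b::real_inner) set" where
  "schatten_ball p c = {f \<in> schatten_class p. schatten_norm p f \<le> ereal c}"

text \<open>A (possibly randomized) online learner: internal randomness \<open>\<omega>\<close> drawn from a probability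
  space M; given the past labelled examples (oldest first) and the current instance, it predicts
  a point of \<open>Y = cball 0 c\<close>; predictions are measurable in \<open>\<omega>\<close>.\<close>
definition online_algorithm ::
  "'r measure \<Rightarrow> real \<Rightarrow> ('r \<Rightarrow> ('v \<times> 'w::real_normed_vector) list \<Rightarrow> 'v \<Rightarrow> 'w) \<Rightarrow> bool" where
  "online_algorithm M c A \<longleftrightarrow>
     (\<forall>h x. (\<lambda>\<omega>. A \<omega> h x) \<in> borel_measurable M \<and> (\<forall>\<omega>\<in>space M. norm (A \<omega> h x) \<le> c))"

definition history :: "(nat \<Rightarrow> 'v) \<Rightarrow> (nat \<Rightarrow> 'w) \<Rightarrow> nat \<Rightarrow> ('v \<times> 'w) list" where
  "history xs ys t = map (\<lambda>i. (xs i, ys i)) [0..<t]"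

text \<open>Regret over T rounds (rounds indexed 0..T-1) against the class F, with
  \<open>X = cball 0 1\<close> and \<open>Y = cball 0 c\<close>.\<close>
definition regret ::
  "'r measure \<Rightarrow> real \<Rightarrow> ('r \<Rightarrow> ('v::real_normed_vector \<times> 'w::real_normed_vector) list \<Rightarrow> 'v \<Rightarrow> 'w)
     \<Rightarrow> nat \<Rightarrow> ('v \<Rightarrow> 'w) set \<Rightarrow> ereal" where
  "regret M c A T F =
     (SUP (xs, ys) \<in> {(xs, ys). \<forall>t<T. norm (xs t) \<le> 1 \<and> norm (ys t) \<le> c}.
        ereal (\<integral>\<omega>. (\<Sum>t<T. (norm (A \<omega> (history xs ys t) (xs t) - ys t))\<^sup>2)
                    - (INF f\<in>F. \<Sum>t<T. (norm (f (xs t) - ys t))\<^sup>2) \<partial>M))"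

definition online_learnable_by ::
  "'r measure \<Rightarrow> real \<Rightarrow> ('v::real_normed_vector \<Rightarrow> 'w::real_normed_vector) set
     \<Rightarrow> ('r \<Rightarrow> ('v \<times> 'w) list \<Rightarrow> 'v \<Rightarrow> 'w) \<Rightarrow> bool" where
  "online_learnable_by M c F A \<longleftrightarrow>
     online_algorithm M c A \<and> mono (\<lambda>T. regret M c A T F)
     \<and> (\<lambda>T. regret M c A T F / ereal (real T)) \<longlonglongrightarrow> 0"

end

theory Submission
  imports Defs
begin


lemma orthonormal_exists:
  assumes inf: "\<not> (\<exists>B::'a::real_inner set. finite B \<and> span B = UNIV)"
  shows "\<exists>e::nat \<Rightarrow> 'a. \<forall>i<n. \<forall>j<n. inner (e i) (e j) = (if i = j then 1 else 0)"
proof (induction n)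
  case 0 then show ?case by simp
next
  case (Suc n)
  then obtain e :: "nat \<Rightarrow> 'a" where e: "\<forall>i<n. \<forall>j<n. inner (e i) (e j) = (if i = j then 1 else 0)" by blast
  have "span (e ` {..<n}) \<noteq> UNIV" using inf by blast
  then obtain a where a: "a \<notin> span (e ` {..<n})" by blast
  define b where "b = a - (\<Sum>i<n. inner (e i) a *\<^sub>R e i)"
  have bsp: "(\<Sum>i<n. inner (e i) a *\<^sub>R e i) \<in> span (e ` {..<n})"
    by (intro span_sum span_scale span_base) auto
  have b0: "b \<noteq> 0"
  proof
    assume "b = 0"
    then have "a = (\<Sum>i<n. inner (e i) a *\<^sub>R e i)" by (simp add: b_def)
    with bsp a show False by simp
  qed
  have orth: "inner (e j) b = 0" if "j < n" for j
  proof -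
    have "inner (e j) (\<Sum>i<n. inner (e i) a *\<^sub>R e i) = (\<Sum>i<n. inner (e i) a * inner (e j) (e i))"
      by (simp add: inner_sum_right)
    also have "\<dots> = (\<Sum>i<n. if i = j then inner (e i) a else 0)"
      using e that by (intro sum.cong) auto
    also have "\<dots> = inner (e j) a" using that by simp
    finally show ?thesis by (simp add: b_def inner_diff_right)
  qed
  define e' where "e' = e(n := b /\<^sub>R norm b)"
  have nb: "inner (b /\<^sub>R norm b) (b /\<^sub>R norm b) = 1"
    using b0 by (simp add: power2_norm_eq_inner[symmetric] )
  show ?case
  proof (intro exI[of _ e'] allI impI)
    fix i j assume "i < Suc n" "j < Suc n"
    then consider "i < n" "j < n" | "i = n" "j < n" | "i < n" "j = n" | "i = n" "j = n" by linarith
    then show "inner (e' i) (e' j) = (if i = j then 1 else 0)"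
    proof cases
      case 1 then show ?thesis using e by (simp add: e'_def)
    next
      case 2 then show ?thesis using orth[of j] by (simp add: e'_def inner_commute)
    next
      case 3 then show ?thesis using orth[of i] by (simp add: e'_def)
    next
      case 4 then show ?thesis using nb by (simp add: e'_def)
    qed
  qed
qed



lemma sv_of_op:
  fixes e :: "nat \<Rightarrow> 'v::real_inner" and u :: "nat \<Rightarrow> 'w::real_inner"
  assumes e: "\<forall>i<n. \<forall>j<n. inner (e i) (e j) = (if i = j then 1 else 0)"
    and u: "\<forall>i<n. \<forall>j<n. inner (u i) (u j) = (if i = j then 1 else 0)"
    and sg: "\<forall>i<n. (sg i)\<^sup>2 = (1::real)"
    and b: "b \<ge> 0"
  shows "singular_value (\<lambda>x. \<Sum>i<n. (b * sg i * inner (e i) x) *\<^sub>R u i) k = (if k < n then b else 0)"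
proof -
  define f where "f = (\<lambda>x. \<Sum>i<n. (b * sg i * inner (e i) x) *\<^sub>R u i)"
  define g where "g = (\<lambda>y. \<Sum>i<n. (b * sg i * inner (u i) y) *\<^sub>R e i)"
  define P where "P = (\<lambda>x. \<Sum>i<n. inner (e i) x *\<^sub>R e i)"
  have adj: "inner (f x) y = inner x (g y)" for x y
    by (simp add: f_def g_def inner_sum_left inner_sum_right inner_commute mult_ac)
  have adjeq: "adjoint_op f = g"
  proof -
    have ex: "\<exists>g. \<forall>x y. inner (f x) y = inner x (g y)" using adj by blast
    have h: "\<forall>x y. inner (f x) y = inner x (adjoint_op f y)"
      unfolding adjoint_op_def by (rule someI_ex[OF ex])
    show ?thesis
    proof
      fix y
      have "inner (adjoint_op f y - g y) (adjoint_op f y - g y) = 0"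
        using h adj by (simp add: inner_diff_right inner_diff_left)
      then show "adjoint_op f y = g y" by simp
    qed
  qed
  have uf: "inner (u j) (f x) = b * sg j * inner (e j) x" if "j < n" for j x
  proof -
    have "inner (u j) (f x) = (\<Sum>i<n. b * sg i * inner (e i) x * inner (u j) (u i))"
      by (simp add: f_def inner_sum_right)
    also have "\<dots> = (\<Sum>i<n. if i = j then b * sg i * inner (e i) x else 0)"
      using u that by (intro sum.cong) auto
    finally show ?thesis using that by simp
  qed
  have gf: "g (f x) = b\<^sup>2 *\<^sub>R P x" for x
  proof -
    have "g (f x) = (\<Sum>i<n. (b * sg i * (b * sg i * inner (e i) x)) *\<^sub>R e i)"
      unfolding g_def by (intro sum.cong) (auto simp: uf)
    also have "\<dots> = (\<Sum>i<n. (b\<^sup>2 * inner (e i) x) *\<^sub>R e i)"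
    proof (intro sum.cong refl)
      fix i assume "i \<in> {..<n}"
      then have "(sg i)\<^sup>2 = 1" using sg by auto
      then show "(b * sg i * (b * sg i * inner (e i) x)) *\<^sub>R e i = (b\<^sup>2 * inner (e i) x) *\<^sub>R e i"
        by (simp add: power2_eq_square mult_ac)
    qed
    finally show ?thesis by (simp add: P_def scaleR_sum_right)
  qed
  define E where "E = span (e ` {..<n})"
  have Pe: "P (e j) = e j" if "j < n" for j
  proof -
    have "P (e j) = (\<Sum>i<n. if i = j then e i else 0)"
      unfolding P_def using e that by (intro sum.cong) auto
    then show ?thesis using that by simp
  qed
  have PE: "P x \<in> E" for x
    unfolding P_def E_def by (intro span_sum span_scale span_base) auto
  have linP: "linear P"
    by (rule linearI) (simp_all add: P_def inner_add_right scaleR_add_left sum.distrib scaleR_sum_right)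
  have EP: "P x = x" if "x \<in> E" for x
    using that unfolding E_def
    by (induction rule: span_induct) (use Pe linP in \<open>auto simp: subspace_def linear_0 linear_add linear_scale\<close>)
  have Eiff: "P x = x \<longleftrightarrow> x \<in> E" for x using PE EP by metis
  have eig: "eigsp_sq f \<mu> = {x. b\<^sup>2 *\<^sub>R P x = \<mu> *\<^sub>R x}" for \<mu>
    by (simp add: eigsp_sq_def adjeq gf)
  have indep: "independent (e ` {..<n})"
  proof (rule pairwise_orthogonal_independent)
    show "pairwise orthogonal (e ` {..<n})"
      using e by (auto simp: pairwise_def orthogonal_def)
    show "0 \<notin> e ` {..<n}"
      using e by fastforce
  qed
  have card: "card (e ` {..<n}) = n"
  proof -
    have "inj_on e {..<n}"
    proof (rule inj_onI)
      fix i j assume "i \<in> {..<n}" "j \<in> {..<n}" "e i = e j"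
      then show "i = j" using e by (metis lessThan_iff zero_neq_one)
    qed
    then show ?thesis by (simp add: card_image)
  qed
  have dimE: "dim E = n" unfolding E_def using dim_span_eq_card_independent[OF indep] card by simp
  have Sset: "{\<mu>. t \<le> \<mu> \<and> (\<exists>x. x \<noteq> 0 \<and> x \<in> eigsp_sq f \<mu>)} = (if t \<le> b\<^sup>2 \<and> 0 < n then {b\<^sup>2} else {})"
    if t: "0 < t" for t
  proof -
    have A: "\<mu> = b\<^sup>2 \<and> (\<exists>x. x \<noteq> 0 \<and> x \<in> E)" if "t \<le> \<mu>" "x \<noteq> 0" "b\<^sup>2 *\<^sub>R P x = \<mu> *\<^sub>R x" for \<mu> x
    proof -
      have mu: "\<mu> > 0" using t that by linarith
      have "x = (1/\<mu>) *\<^sub>R (\<mu> *\<^sub>R x)" using mu by simp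
      also have "\<dots> = (b\<^sup>2 / \<mu>) *\<^sub>R P x" using that(3) by (simp flip: that(3))
      finally have "x = (b\<^sup>2 / \<mu>) *\<^sub>R P x" .
      then have "x \<in> E" unfolding E_def using PE[of x] E_def by (metis span_scale)
      then have "P x = x" using EP by blast
      then have "(b\<^sup>2 - \<mu>) *\<^sub>R x = 0" using that(3) by (simp add: algebra_simps)
      then show ?thesis using that(2) \<open>x \<in> E\<close> by auto
    qed
    have B: "\<exists>x. x \<noteq> 0 \<and> x \<in> E \<Longrightarrow> 0 < n"
      unfolding E_def by (metis lessThan_empty_iff less_nat_zero_code neq0_conv image_empty span_empty singletonD)
    have C: "0 < n \<Longrightarrow> e 0 \<noteq> 0 \<and> b\<^sup>2 *\<^sub>R P (e 0) = b\<^sup>2 *\<^sub>R e 0"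
      using e Pe by force
    show ?thesis
      using A B C by (auto simp: eig)
  qed
  have svc: "sv_count f t = (if t \<le> b\<^sup>2 then n else 0)" if t: "0 < t" for t
  proof (cases "t \<le> b\<^sup>2 \<and> 0 < n")
    case True
    then have "b > 0" using t b by (smt (verit) power2_eq_square mult_nonpos_nonneg zero_le_square)
    then have "eigsp_sq f (b\<^sup>2) = E"
      using Eiff by (auto simp: eig)
    then show ?thesis unfolding sv_count_def using Sset[OF t] True dimE by simp
  next
    case False
    then show ?thesis unfolding sv_count_def using Sset[OF t] by auto
  qed
  show ?thesis
  proof (cases "k < n \<and> b > 0")
    case True
    have "{t. 0 < t \<and> Suc k \<le> sv_count f t} \<union> {0} = {0..b\<^sup>2}"
    proof (intro set_eqI iffI)
      fix t assume "t \<in> {t. 0 < t \<and> Suc k \<le> sv_count f t} \<union> {0}"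
      then show "t \<in> {0..b\<^sup>2}"
        using True svc[of t] by (cases "t \<le> b\<^sup>2") auto
    next
      fix t assume "t \<in> {0..b\<^sup>2}"
      then show "t \<in> {t. 0 < t \<and> Suc k \<le> sv_count f t} \<union> {0}"
        using True svc[of t] by auto
    qed
    then show ?thesis using True unfolding f_def[symmetric] singular_value_def by simp
  next
    case False
    have E0: "{t. 0 < t \<and> Suc k \<le> sv_count f t} = {}"
    proof (intro set_eqI iffI)
      fix t assume t: "t \<in> {t. 0 < t \<and> Suc k \<le> sv_count f t}"
      show "t \<in> {}"
      proof (cases "b = 0")
        case True then show ?thesis using t svc[of t] by auto
      next
        case False then show ?thesis using t svc[of t] \<open>\<not> (k < n \<and> b > 0)\<close> b
          by (cases "t \<le> b\<^sup>2") auto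
      qed
    qed auto
    have "{t. 0 < t \<and> Suc k \<le> sv_count f t} \<union> {0} = {0}" unfolding E0 by simp
    then show ?thesis using False b unfolding f_def[symmetric] singular_value_def by (simp del: Un_insert_right)
  qed
qed



lemma compact_box_sum:
  fixes w :: "nat \<Rightarrow> 'a::real_normed_vector"
  shows "compact {\<Sum>i<n. r i *\<^sub>R w i | r. \<forall>i. \<bar>r i\<bar> \<le> B}"
proof (cases "B \<ge> 0")
  case False
  then have "{\<Sum>i<n. r i *\<^sub>R w i | r. \<forall>i. \<bar>r i\<bar> \<le> B} = {}"
    by (auto dest: spec[of _ 0])
  then show ?thesis by (simp only: compact_empty)
next
  case B: True
  show ?thesis
  proof (induction n)
    case 0
    have "{\<Sum>i<0. r i *\<^sub>R w i | r. \<forall>i. \<bar>r i\<bar> \<le> B} = {0}"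
      using B by (auto intro!: exI[of _ "\<lambda>_. 0"])
    then show ?case by simp
  next
    case (Suc n)
    define S where "S = (\<lambda>x. x *\<^sub>R w n) ` {-B..B}"
    have cS: "compact S" unfolding S_def
      by (intro compact_continuous_image continuous_intros) auto
    have eq: "{\<Sum>i<Suc n. r i *\<^sub>R w i | r. \<forall>i. \<bar>r i\<bar> \<le> B}
      = {x + y | x y. x \<in> {\<Sum>i<n. r i *\<^sub>R w i | r. \<forall>i. \<bar>r i\<bar> \<le> B} \<and> y \<in> S}"
    proof (intro set_eqI iffI)
      fix z assume "z \<in> {\<Sum>i<Suc n. r i *\<^sub>R w i | r. \<forall>i. \<bar>r i\<bar> \<le> B}"
      then obtain r where r: "\<forall>i. \<bar>r i\<bar> \<le> B" "z = (\<Sum>i<Suc n. r i *\<^sub>R w i)" by blast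
      have "r n *\<^sub>R w n \<in> S" unfolding S_def using r(1)[rule_format, of n] by (auto simp: abs_le_iff)
      then show "z \<in> {x + y | x y. x \<in> {\<Sum>i<n. r i *\<^sub>R w i | r. \<forall>i. \<bar>r i\<bar> \<le> B} \<and> y \<in> S}"
        using r by auto
    next
      fix z assume "z \<in> {x + y | x y. x \<in> {\<Sum>i<n. r i *\<^sub>R w i | r. \<forall>i. \<bar>r i\<bar> \<le> B} \<and> y \<in> S}"
      then obtain r s where r: "\<forall>i. \<bar>r i\<bar> \<le> B" "s \<in> {-B..B}" "z = (\<Sum>i<n. r i *\<^sub>R w i) + s *\<^sub>R w n"
        unfolding S_def by blast
      define r' where "r' = r(n := s)"
      have "(\<Sum>i<n. r' i *\<^sub>R w i) = (\<Sum>i<n. r i *\<^sub>R w i)"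
        unfolding r'_def by (intro sum.cong) auto
      then have "z = (\<Sum>i<Suc n. r' i *\<^sub>R w i)" using r by (simp add: r'_def)
      moreover have "\<forall>i. \<bar>r' i\<bar> \<le> B" using r by (auto simp: r'_def)
      ultimately show "z \<in> {\<Sum>i<Suc n. r i *\<^sub>R w i | r. \<forall>i. \<bar>r i\<bar> \<le> B}" by blast
    qed
    show ?case unfolding eq by (intro compact_sums Suc cS)
  qed
qed

lemma op_in_ball:
  fixes e :: "nat \<Rightarrow> 'v::real_inner" and u :: "nat \<Rightarrow> 'w::real_inner"
  assumes e: "\<forall>i<n. \<forall>j<n. inner (e i) (e j) = (if i = j then 1 else 0)"
    and u: "\<forall>i<n. \<forall>j<n. inner (u i) (u j) = (if i = j then 1 else 0)"
    and sg: "\<forall>i<n. (sg i)\<^sup>2 = (1::real)"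
    and b: "b \<ge> 0"
    and p: "1 \<le> p"
    and hb: "if p = \<infinity> then b \<le> c else (real n * b powr real_of_ereal p) powr (1 / real_of_ereal p) \<le> c"
  shows "(\<lambda>x. \<Sum>i<n. (b * sg i * inner (e i) x) *\<^sub>R u i) \<in> schatten_ball p c"
proof -
  define f where "f = (\<lambda>x. \<Sum>i<n. (b * sg i * inner (e i) x) *\<^sub>R u i)"
  have sv: "singular_value f k = (if k < n then b else 0)" for k
    unfolding f_def by (rule sv_of_op[OF e u sg b])
  have sgabs: "\<bar>sg i\<bar> = 1" if "i < n" for i
    using sg that by (metis abs_of_nonneg abs_power2 one_power2 power2_abs power2_eq_1_iff abs_neg_one abs_one)
  have bl: "bounded_linear f"
    unfolding f_def
    by (intro bounded_linear_sum bounded_linear_compose[OF bounded_linear_scaleR_left]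
          bounded_linear_compose[OF bounded_linear_mult_right] bounded_linear_inner_right)
  have "f ` cball 0 1 \<subseteq> {\<Sum>i<n. r i *\<^sub>R u i | r. \<forall>i. \<bar>r i\<bar> \<le> b}"
  proof
    fix z assume "z \<in> f ` cball 0 1"
    then obtain x where x: "norm x \<le> 1" "z = f x" by auto
    define r where "r = (\<lambda>i. if i < n then b * sg i * inner (e i) x else 0)"
    have "\<bar>r i\<bar> \<le> b" for i
    proof (cases "i < n")
      case True
      have ne: "norm (e i) = 1" using e True by (simp add: norm_eq_sqrt_inner)
      have "\<bar>inner (e i) x\<bar> \<le> 1"
        using Cauchy_Schwarz_ineq2[of "e i" x] ne x(1) by simp
      then have "\<bar>b * sg i * inner (e i) x\<bar> \<le> b * 1"
        using b sgabs[OF True] by (simp add: abs_mult mult_left_le)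
      then show ?thesis using True by (simp add: r_def)
    qed (use b in \<open>simp add: r_def\<close>)
    moreover have "z = (\<Sum>i<n. r i *\<^sub>R u i)" using x by (simp add: f_def r_def)
    ultimately show "z \<in> {\<Sum>i<n. r i *\<^sub>R u i | r. \<forall>i. \<bar>r i\<bar> \<le> b}" by blast
  qed
  then have "closure (f ` cball 0 1) \<subseteq> {\<Sum>i<n. r i *\<^sub>R u i | r. \<forall>i. \<bar>r i\<bar> \<le> b}"
    by (intro closure_minimal compact_imp_closed compact_box_sum)
  then have "compact (closure (f ` cball 0 1))"
    using compact_Int_closed[OF compact_box_sum[where n=n and w=u and B=b] closed_closure[of "f ` cball 0 1"]]
    by (simp add: Int_absorb1)
  then have cop: "compact_op f" using bl by (simp add: compact_op_def)
  have nrm: "schatten_norm p f \<le> ereal c"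
  proof (cases "p = \<infinity>")
    case True
    then have "b \<le> c" using hb by simp
    then show ?thesis using True b unfolding schatten_norm_def sv
      by (auto intro!: SUP_least)
  next
    case False
    then obtain q where q: "p = ereal q" using p by (cases p) auto
    have sm: "(\<lambda>k. singular_value f k powr q) sums (\<Sum>k\<in>{..<n}. b powr q)"
    proof -
      have "(\<lambda>k. singular_value f k powr q) = (\<lambda>k. if k \<in> {..<n} then b powr q else 0)"
        using q p by (auto simp: sv)
      then show ?thesis using sums_If_finite_set[of "{..<n}" "\<lambda>_. b powr q"] by simp
    qed
    then show ?thesis using hb q False unfolding schatten_norm_def
      by (simp add: sums_summable[OF sm] sums_unique[OF sm, symmetric])
  qed
  show ?thesis
    using cop nrm unfolding schatten_ball_def schatten_class_def f_def[symmetric]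
    by (auto intro: le_less_trans)
qed



lemma main_bound:
  fixes M :: "'r measure"
    and A :: "'r \<Rightarrow> ('v::{real_inner, complete_space} \<times> 'w::{real_inner, complete_space}) list \<Rightarrow> 'v \<Rightarrow> 'w"
    and c :: real and p :: ereal and T :: nat
  assumes infV: "\<not> (\<exists>B::'v set. finite B \<and> span B = UNIV)"
    and infW: "\<not> (\<exists>B::'w set. finite B \<and> span B = UNIV)"
    and c_pos: "c > 0"
    and p_ge: "1 \<le> p"
    and M: "prob_space M"
    and A: "online_algorithm M c A"
  shows "ereal (c\<^sup>2 * real T powr (if p = \<infinity> then 1 else 1 - 1 / real_of_ereal p))
           \<le> regret M c A T (schatten_ball p c)"
proof -
  interpret prob_space M by (rule M)
  obtain e :: "nat \<Rightarrow> 'v" where e: "\<forall>i<T. \<forall>j<T. inner (e i) (e j) = (if i = j then 1 else 0)"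
    using orthonormal_exists[OF infV] by blast
  obtain u :: "nat \<Rightarrow> 'w" where u: "\<forall>i<T. \<forall>j<T. inner (u i) (u j) = (if i = j then 1 else 0)"
    using orthonormal_exists[OF infW] by blast
  have ne: "norm (e t) = 1" if "t < T" for t using e that by (simp add: norm_eq_sqrt_inner)
  have nu: "norm (u t) = 1" if "t < T" for t using u that by (simp add: norm_eq_sqrt_inner)
  define sg :: "('v \<times> 'w) list \<Rightarrow> nat \<Rightarrow> real" where
    "sg l t = (if (\<integral>\<omega>. inner (A \<omega> l (e t)) (u t) \<partial>M) \<le> 0 then 1 else -1)" for l t
  define Ls where "Ls = rec_nat [] (\<lambda>t l. l @ [(e t, (sg l t * c) *\<^sub>R u t)])"
  define \<sigma> where "\<sigma> t = sg (Ls t) t" for t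
  define ys where "ys t = (\<sigma> t * c) *\<^sub>R u t" for t
  have Ls0: "Ls 0 = []" and LsS: "Ls (Suc t) = Ls t @ [(e t, ys t)]" for t
    by (simp_all add: Ls_def ys_def \<sigma>_def)
  have hist: "Ls t = history e ys t" for t
    by (induction t) (simp_all add: Ls0 LsS history_def)
  define P where "P t \<omega> = A \<omega> (history e ys t) (e t)" for t \<omega>
  have measP: "P t \<in> borel_measurable M" for t
    using A unfolding online_algorithm_def P_def by blast
  have bndP: "norm (P t \<omega>) \<le> c" if "\<omega> \<in> space M" for t \<omega>
    using A that unfolding online_algorithm_def P_def by blast
  have sq: "(\<sigma> t)\<^sup>2 = 1" for t by (simp add: \<sigma>_def sg_def)
  have sgint: "\<sigma> t * (\<integral>\<omega>. inner (P t \<omega>) (u t) \<partial>M) \<le> 0" for t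
    by (simp add: \<sigma>_def sg_def P_def hist[symmetric] mult_nonpos_nonneg)
  have measI: "(\<lambda>\<omega>. inner (P t \<omega>) (u t)) \<in> borel_measurable M" for t
    by (rule borel_measurable_continuous_on[OF _ measP]) (intro continuous_intros)
  have intI: "integrable M (\<lambda>\<omega>. inner (P t \<omega>) (u t))" if "t < T" for t
  proof (rule integrable_const_bound[where B=c])
    show "AE \<omega> in M. norm (inner (P t \<omega>) (u t)) \<le> c"
    proof (rule AE_I2)
      fix \<omega> assume "\<omega> \<in> space M"
      then show "norm (inner (P t \<omega>) (u t)) \<le> c"
        using Cauchy_Schwarz_ineq2[of "P t \<omega>" "u t"] bndP[of \<omega> t] nu[OF that] by simp
    qed
  qed (rule measI)
  define loss where "loss t \<omega> = (norm (P t \<omega> - ys t))\<^sup>2" for t \<omega>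
  have measL: "loss t \<in> borel_measurable M" for t
    unfolding loss_def
    by (rule borel_measurable_continuous_on[OF _ measP, where f="\<lambda>z. (norm (z - ys t))\<^sup>2"]) (intro continuous_intros)
  have nys: "norm (ys t) = c" if "t < T" for t
  proof -
    have "\<bar>\<sigma> t\<bar> = 1" using sq[of t] by (metis abs_power2 power2_eq_1_iff abs_neg_one abs_one)
    then show ?thesis using nu[OF that] c_pos by (simp add: ys_def abs_mult)
  qed
  have intL: "integrable M (loss t)" if "t < T" for t
  proof (rule integrable_const_bound[where B="(2*c)\<^sup>2"])
    show "AE \<omega> in M. norm (loss t \<omega>) \<le> (2*c)\<^sup>2"
    proof (rule AE_I2)
      fix \<omega> assume "\<omega> \<in> space M"
      then have "norm (P t \<omega> - ys t) \<le> 2*c"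
        using norm_triangle_ineq4[of "P t \<omega>" "ys t"] bndP[of \<omega> t] nys[OF that] by simp
      then show "norm (loss t \<omega>) \<le> (2*c)\<^sup>2"
        unfolding loss_def using power_mono[of "norm (P t \<omega> - ys t)" "2*c" 2] by simp
    qed
  qed (rule measL)
  have lossexp: "loss t \<omega> \<ge> c\<^sup>2 - 2 * \<sigma> t * c * inner (P t \<omega>) (u t)" if "t < T" for t \<omega>
  proof -
    have "loss t \<omega> = (norm (P t \<omega>))\<^sup>2 - 2 * inner (P t \<omega>) (ys t) + (norm (ys t))\<^sup>2"
      unfolding loss_def by (simp add: power2_norm_eq_inner inner_diff_left inner_diff_right inner_commute)
    also have "\<dots> = (norm (P t \<omega>))\<^sup>2 - 2 * \<sigma> t * c * inner (P t \<omega>) (u t) + c\<^sup>2"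
      using nys[OF that] by (simp add: ys_def)
    finally show ?thesis by simp
  qed
  have intloss: "(\<integral>\<omega>. loss t \<omega> \<partial>M) \<ge> c\<^sup>2" if "t < T" for t
  proof -
    have "(\<integral>\<omega>. c\<^sup>2 - 2 * \<sigma> t * c * inner (P t \<omega>) (u t) \<partial>M) \<le> (\<integral>\<omega>. loss t \<omega> \<partial>M)"
      using lossexp[OF that] intL[OF that] intI[OF that] by (intro integral_mono) auto
    moreover have "(\<integral>\<omega>. c\<^sup>2 - 2 * \<sigma> t * c * inner (P t \<omega>) (u t) \<partial>M)
        = c\<^sup>2 - 2 * c * (\<sigma> t * (\<integral>\<omega>. inner (P t \<omega>) (u t) \<partial>M))"
      using intI[OF that] by (simp add: prob_space mult_ac)
    moreover have "2 * c * (\<sigma> t * (\<integral>\<omega>. inner (P t \<omega>) (u t) \<partial>M)) \<le> 0"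
      using sgint[of t] c_pos by (simp add: mult_nonneg_nonpos)
    ultimately show ?thesis by linarith
  qed
  define q where "q = real_of_ereal p"
  have qp: "1 \<le> q \<and> p = ereal q" if "p \<noteq> \<infinity>"
    using p_ge that unfolding q_def by (cases p) auto
  define a where "a = (if p = \<infinity> then 1 else real T powr (-1/q))"
  have a0: "0 \<le> a" by (simp add: a_def)
  have a1: "a \<le> 1"
  proof (cases "p = \<infinity> \<or> T = 0")
    case False
    then have "1 \<le> q" "T \<ge> 1" using qp by auto
    then have "real T powr (-1/q) \<le> real T powr 0"
      by (intro powr_mono) auto
    then show ?thesis using False by (simp add: a_def)
  qed (auto simp: a_def)
  define b where "b = a * c"
  have b0: "0 \<le> b" using a0 c_pos by (simp add: b_def)
  have hb: "if p = \<infinity> then b \<le> c else (real T * b powr real_of_ereal p) powr (1 / real_of_ereal p) \<le> c"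
  proof (cases "p = \<infinity>")
    case True then show ?thesis by (simp add: b_def a_def)
  next
    case False
    then have q1: "1 \<le> q" using qp by auto
    show ?thesis
    proof (cases "T = 0")
      case True then show ?thesis using False c_pos by simp
    next
      case T: False
      have "b powr q = a powr q * c powr q" unfolding b_def using a0 c_pos by (simp add: powr_mult)
      also have "a powr q = real T powr (-1)"
        using False q1 by (simp add: a_def powr_powr)
      finally have "real T * b powr q = c powr q"
        using T by (simp add: powr_minus_divide)
      then have "(real T * b powr q) powr (1/q) = c"
        using q1 c_pos by (simp add: powr_powr)
      then show ?thesis using False by (simp add: q_def)
    qed
  qed
  have sq': "\<forall>i<T. (\<sigma> i)\<^sup>2 = 1" using sq by simp
  define f where "f = (\<lambda>x. \<Sum>i<T. (b * \<sigma> i * inner (e i) x) *\<^sub>R u i)"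
  have fF: "f \<in> schatten_ball p c"
    unfolding f_def by (rule op_in_ball[OF e u sq' b0 p_ge hb])
  have fe: "f (e t) = (b * \<sigma> t) *\<^sub>R u t" if "t < T" for t
  proof -
    have "f (e t) = (\<Sum>i<T. if i = t then (b * \<sigma> i) *\<^sub>R u i else 0)"
      unfolding f_def using e that by (intro sum.cong) auto
    then show ?thesis using that by simp
  qed
  have lf: "(norm (f (e t) - ys t))\<^sup>2 = (c - b)\<^sup>2" if "t < T" for t
  proof -
    have "f (e t) - ys t = (\<sigma> t * (b - c)) *\<^sub>R u t"
      using fe[OF that] by (simp add: ys_def algebra_simps)
    moreover have "\<bar>\<sigma> t\<bar> = 1" using sq[of t] by (metis abs_power2 power2_eq_1_iff abs_neg_one abs_one)
    ultimately show ?thesis using nu[OF that] by (simp add: abs_mult power2_abs power2_commute)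
  qed
  define I where "I = (INF g\<in>schatten_ball p c. \<Sum>t<T. (norm (g (e t) - ys t))\<^sup>2)"
  have "I \<le> (\<Sum>t<T. (norm (f (e t) - ys t))\<^sup>2)"
    unfolding I_def by (rule cINF_lower[OF _ fF]) (auto intro!: bdd_belowI[where m=0] sum_nonneg)
  also have "\<dots> = real T * (c - b)\<^sup>2" using lf by simp
  finally have Ile: "I \<le> real T * (c - b)\<^sup>2" .
  have "(\<integral>\<omega>. (\<Sum>t<T. (norm (A \<omega> (history e ys t) (e t) - ys t))\<^sup>2) - I \<partial>M)
      = (\<integral>\<omega>. (\<Sum>t<T. loss t \<omega>) - I \<partial>M)"
    by (simp add: loss_def P_def)
  also have "\<dots> = (\<Sum>t<T. (\<integral>\<omega>. loss t \<omega> \<partial>M)) - I"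
  proof -
    have isum: "integrable M (\<lambda>\<omega>. \<Sum>t<T. loss t \<omega>)"
      by (auto intro!: Bochner_Integration.integrable_sum intL)
    have "(\<integral>\<omega>. (\<Sum>t<T. loss t \<omega>) - I \<partial>M) = (\<integral>\<omega>. (\<Sum>t<T. loss t \<omega>) \<partial>M) - I"
      using isum by (simp add: prob_space)
    also have "(\<integral>\<omega>. (\<Sum>t<T. loss t \<omega>) \<partial>M) = (\<Sum>t<T. (\<integral>\<omega>. loss t \<omega> \<partial>M))"
      by (auto intro!: Bochner_Integration.integral_sum intL)
    finally show ?thesis .
  qed
  also have "\<dots> \<ge> real T * c\<^sup>2 - I"
    using sum_mono[of "{..<T}" "\<lambda>_. c\<^sup>2" "\<lambda>t. \<integral>\<omega>. loss t \<omega> \<partial>M"] intloss by simp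
  finally have intge: "(\<integral>\<omega>. (\<Sum>t<T. (norm (A \<omega> (history e ys t) (e t) - ys t))\<^sup>2) - I \<partial>M)
      \<ge> real T * c\<^sup>2 - real T * (c - b)\<^sup>2" using Ile by linarith
  have lhs: "c\<^sup>2 * real T powr (if p = \<infinity> then 1 else 1 - 1 / real_of_ereal p) = c\<^sup>2 * real T * a"
  proof (cases "p = \<infinity>")
    case True then show ?thesis by (simp add: a_def)
  next
    case False
    show ?thesis
    proof (cases "T = 0")
      case True then show ?thesis using False by simp
    next
      case T: False
      have "real T powr (1 - 1 / q) = real T powr (1 + (-1/q))" by simp
      also have "\<dots> = real T powr 1 * real T powr (-1/q)" by (rule powr_add)
      finally have "real T powr (1 - 1 / q) = real T powr 1 * real T powr (-1/q)" .
      then have "real T powr (1 - 1 / q) = real T * real T powr (-1/q)" using T by simp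
      then show ?thesis using False T by (simp add: a_def q_def)
    qed
  qed
  have arith: "c\<^sup>2 * real T * a \<le> real T * c\<^sup>2 - real T * (c - b)\<^sup>2"
  proof -
    have "real T * c\<^sup>2 - real T * (c - b)\<^sup>2 = c\<^sup>2 * real T * a + c\<^sup>2 * real T * (a * (1 - a))"
      by (simp add: b_def power2_eq_square algebra_simps)
    moreover have "0 \<le> c\<^sup>2 * real T * (a * (1 - a))" using a0 a1 by simp
    ultimately show ?thesis by linarith
  qed
  have mem: "(e, ys) \<in> {(xs, ys). \<forall>t<T. norm (xs t) \<le> 1 \<and> norm (ys t) \<le> c}"
    using ne nys by auto
  have "ereal (c\<^sup>2 * real T powr (if p = \<infinity> then 1 else 1 - 1 / real_of_ereal p))
     \<le> ereal (\<integral>\<omega>. (\<Sum>t<T. (norm (A \<omega> (history e ys t) (e t) - ys t))\<^sup>2) - I \<partial>M)"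
    unfolding ereal_less_eq(3) lhs using arith intge by linarith
  also have "\<dots> \<le> regret M c A T (schatten_ball p c)"
    unfolding regret_def I_def
    by (rule SUP_upper[OF mem, where f="\<lambda>(xs, ys). ereal (\<integral>\<omega>. (\<Sum>t<T. (norm (A \<omega> (history xs ys t) (xs t) - ys t))\<^sup>2)
                    - (INF f\<in>schatten_ball p c. \<Sum>t<T. (norm (f (xs t) - ys t))\<^sup>2) \<partial>M)", simplified])
  finally show ?thesis .
qed


theorem theorem4:
  fixes M :: "'r measure"
    and A :: "'r \<Rightarrow> ('v::{real_inner, complete_space} \<times> 'w::{real_inner, complete_space}) list \<Rightarrow> 'v \<Rightarrow> 'w"
    and c :: real and p :: ereal and T :: nat
  assumes sepV: "\<exists>D::'v set. countable D \<and> closure D = UNIV"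
    and sepW: "\<exists>D::'w set. countable D \<and> closure D = UNIV"
    and infV: "\<not> (\<exists>B::'v set. finite B \<and> span B = UNIV)"
    and infW: "\<not> (\<exists>B::'w set. finite B \<and> span B = UNIV)"
    and c_pos: "c > 0"
    and p_ge: "1 \<le> p"
    and M: "prob_space M"
    and A: "online_algorithm M c A"
  shows "ereal (c\<^sup>2 * real T powr (if p = \<infinity> then 1 else 1 - 1 / real_of_ereal p))
           \<le> regret M c A T (schatten_ball p c)
         \<and> (p = \<infinity> \<longrightarrow> \<not> online_learnable_by M c (schatten_ball p c) A)"
proof
  show "ereal (c\<^sup>2 * real T powr (if p = \<infinity> then 1 else 1 - 1 / real_of_ereal p))
           \<le> regret M c A T (schatten_ball p c)"
    by (rule main_bound[OF infV infW c_pos p_ge M A])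
  show "p = \<infinity> \<longrightarrow> \<not> online_learnable_by M c (schatten_ball p c) A"
  proof (intro impI notI)
    assume pinf: "p = \<infinity>" and L: "online_learnable_by M c (schatten_ball p c) A"
    then have lim: "(\<lambda>T. regret M c A T (schatten_ball p c) / ereal (real T)) \<longlonglongrightarrow> 0"
      by (simp add: online_learnable_by_def)
    have ge: "ereal (c\<^sup>2) \<le> regret M c A n (schatten_ball p c) / ereal (real n)" if "n \<ge> 1" for n
    proof -
      have "ereal (c\<^sup>2 * real n) \<le> regret M c A n (schatten_ball p c)"
        using main_bound[OF infV infW c_pos p_ge M A, of n] pinf that by simp
      then have "ereal (c\<^sup>2 * real n) / ereal (real n) \<le> regret M c A n (schatten_ball p c) / ereal (real n)"
        using that by (intro ereal_divide_right_mono) auto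
      moreover have "ereal (c\<^sup>2 * real n) / ereal (real n) = ereal (c\<^sup>2)"
        using that by (simp add: divide_ereal_def)
      ultimately show ?thesis by simp
    qed
    have "ereal (c\<^sup>2) \<le> 0"
      by (rule LIMSEQ_le_const[OF lim]) (use ge in blast)
    then show False using c_pos by simp
  qed
qed

end
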